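(* Let $q$ be a prime power, $\beta$ a primitive element of $\mathbb{F}_{q^2}$, $\mathrm{Tr}(x)=x+x^q$, and $\Psi:\mathbb{F}_{q^2}^n\to\mathbb{F}_q^{2n}$, $\Psi(\alpha_0,\ldots,\alpha_{n-1})=\left(\mathrm{Tr}(\beta\alpha_0),\ldots,\mathrm{Tr}(\beta\alpha_{n-1}),\mathrm{Tr}(\beta^q\alpha_0),\ldots,\mathrm{Tr}(\beta^q\alpha_{n-1})\right)$. Let $\mathscr{C}\subseteq\mathbb{F}_{q^2}^n$. Then $\mathscr{C}$ is an ($\mathbb{F}_q$-linear) additive conjucyclic code of length $n$ over $\mathbb{F}_{q^2}$ if and only if $\mathscr{D}=\Psi(\mathscr{C})$ is a $q$-ary linear cyclic code of length $2n$. Moreover, in this case the minimum Hamming weight of $\mathscr{C}$ equals the minimum symplectic weight of $\mathscr{D}$: $w_h(\mathscr{C})=w_s(\mathscr{D})$.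
   Context: An ($\mathbb{F}_q$-linear) additive code of length $n$ over $\mathbb{F}_{q^2}$ is an $\mathbb{F}_q$-subspace of $\mathbb{F}_{q^2}^n$. It is conjucyclic if it is closed under $T(c_0,\ldots,c_{n-1})=(c_{n-1}^q,c_0,\ldots,c_{n-2})$. A $q$-ary linear cyclic code of length $2n$ is an $\mathbb{F}_q$-subspace of $\mathbb{F}_q^{2n}$ closed under $\sigma(v_0,\ldots,v_{2n-1})=(v_{2n-1},v_0,\ldots,v_{2n-2})$. For $u\in\mathbb{F}_{q^2}^n$, $w_h(u)$ is the number of nonzero coordinates; for $v\in\mathbb{F}_q^{2n}$, $w_s(v)=\#\{j\in\{0,\ldots,n-1\}:(v_j,v_{n+j})\neq(0,0)\}$. The minimum Hamming (resp. symplectic) weight of a code is the minimum of $w_h$ (resp. $w_s$) over its nonzero codewords. *)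

theory Defs
  imports "HOL-Computational_Algebra.Primes"
begin

text \<open>The field F_{q^2} is a finite field type 'a with CARD('a) = q^2;
  F_q is realised as its unique subfield of order q, namely {x. x^q = x}.
  Vectors of length n are lists of length n.\<close>

definition subF :: "nat \<Rightarrow> ('a::field) set" where
  "subF q = {x. x ^ q = x}"

definition tr :: "nat \<Rightarrow> 'a::field \<Rightarrow> 'a" where
  "tr q x = x + x ^ q"

definition primitive_elem :: "'a::field \<Rightarrow> bool" where
  "primitive_elem b \<longleftrightarrow> (\<forall>x. x \<noteq> 0 \<longrightarrow> (\<exists>k::nat. x = b ^ k))"

definition subspace_over :: "'a::field set \<Rightarrow> nat \<Rightarrow> 'a list set \<Rightarrow> bool" where
  "subspace_over K m C \<longleftrightarrow>
     C \<subseteq> {v. length v = m} \<and> replicate m 0 \<in> C \<and>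
     (\<forall>x\<in>C. \<forall>y\<in>C. map2 (+) x y \<in> C) \<and>
     (\<forall>a\<in>K. \<forall>x\<in>C. map (\<lambda>t. a * t) x \<in> C)"

definition conj_shift :: "nat \<Rightarrow> 'a::field list \<Rightarrow> 'a list" where
  "conj_shift q c = (last c ^ q) # butlast c"

definition cyc_shift :: "'a list \<Rightarrow> 'a list" where
  "cyc_shift v = last v # butlast v"

definition additive_conjucyclic :: "nat \<Rightarrow> nat \<Rightarrow> 'a::field list set \<Rightarrow> bool" where
  "additive_conjucyclic q n C \<longleftrightarrow>
     subspace_over (subF q) n C \<and> (\<forall>c\<in>C. conj_shift q c \<in> C)"

definition linear_cyclic :: "nat \<Rightarrow> nat \<Rightarrow> 'a::field list set \<Rightarrow> bool" where
  "linear_cyclic q m D \<longleftrightarrow>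
     D \<subseteq> {v. set v \<subseteq> subF q} \<and> subspace_over (subF q) m D \<and>
     (\<forall>v\<in>D. cyc_shift v \<in> D)"

definition Psi :: "nat \<Rightarrow> 'a::field \<Rightarrow> 'a list \<Rightarrow> 'a list" where
  "Psi q b a = map (\<lambda>x. tr q (b * x)) a @ map (\<lambda>x. tr q (b ^ q * x)) a"

definition w_h :: "'a::zero list \<Rightarrow> nat" where
  "w_h u = card {j. j < length u \<and> u ! j \<noteq> 0}"

definition w_s :: "nat \<Rightarrow> 'a::zero list \<Rightarrow> nat" where
  "w_s n v = card {j. j < n \<and> (v ! j, v ! (n + j)) \<noteq> (0, 0)}"

definition min_hamming :: "'a::zero list set \<Rightarrow> nat" where
  "min_hamming C = Min {w_h c | c. c \<in> C \<and> c \<noteq> replicate (length c) 0}"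

definition min_symplectic :: "nat \<Rightarrow> 'a::zero list set \<Rightarrow> nat" where
  "min_symplectic n D = Min {w_s n v | v. v \<in> D \<and> v \<noteq> replicate (length v) 0}"

end

theory Submission
  imports Defs "HOL-Number_Theory.Residues" "HOL-Computational_Algebra.Polynomial"
begin

locale ctx =
  fixes q :: nat and \<beta> :: "'a::{finite,field}"
  assumes qpow: "\<exists>p k. prime p \<and> k > 0 \<and> q = p ^ k"
    and cardq: "card (UNIV :: 'a set) = q ^ 2"
    and prim: "primitive_elem \<beta>"
begin

lemma q_ge2: "q \<ge> 2"
proof -
  obtain p k where pk: "prime p" "k > 0" "q = p ^ k" using qpow by blast
  then have "p \<ge> 2" using prime_ge_2_nat by blast
  moreover have "p \<le> p ^ k" using pk(2) \<open>p \<ge> 2\<close> by (simp add: self_le_power)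
  ultimately show ?thesis using pk(3) by linarith
qed

lemma frob: "(x + y :: 'a) ^ q = x ^ q + y ^ q"
proof -
  obtain p k where pk: "prime p" "k > 0" "q = p ^ k" using qpow by blast
  have cp: "prime CHAR('a)"
    by (rule prime_CHAR_semidom[OF finite_imp_CHAR_pos[OF finite_UNIV]])
  have "CHAR('a) dvd p ^ (k * 2)"
    using CHAR_dvd_CARD[where 'a='a] cardq pk by (simp add: power_mult)
  then have "CHAR('a) dvd p" using cp prime_dvd_power by blast
  then have "CHAR('a) = p" using cp pk(1) primes_dvd_imp_eq by blast
  then show ?thesis using freshmans_dream'[OF cp, of q k] pk by simp
qed

lemma pow_card: "(x :: 'a) ^ card (UNIV :: 'a set) = x"
proof (cases "x = 0")
  case False
  have "x * (\<Prod>y\<in>UNIV-{0}. x * y) = x * x ^ (card (UNIV :: 'a set) - 1) * \<Prod>(UNIV-{0})"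
    by (simp add: prod.distrib mult_ac)
  also have "x * x ^ (card (UNIV :: 'a set) - 1) = x ^ Suc (card (UNIV :: 'a set) - 1)"
    by (subst power_Suc) auto
  also have "Suc (card (UNIV :: 'a set) - 1) = card (UNIV :: 'a set)"
    using finite_UNIV_card_ge_0[where ?'a = 'a] by simp
  also have "(\<Prod>y\<in>UNIV-{0}. x * y) = (\<Prod>y\<in>UNIV-{0}. y)"
    by (rule prod.reindex_bij_witness[of _ "\<lambda>y. y / x" "\<lambda>y. x * y"]) (use False in auto)
  finally show ?thesis
    by simp
qed (use finite_UNIV_card_ge_0[where ?'a = 'a] in auto)

lemma pow_qq: "((x :: 'a) ^ q) ^ q = x"
  using pow_card[of x] cardq by (simp add: power_mult[symmetric] power2_eq_square)

lemma frob_minus: "(- x :: 'a) ^ q = - (x ^ q)"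
proof -
  have "(x + - x) ^ q = x ^ q + (- x) ^ q" by (rule frob)
  then have "0 = x ^ q + (- x) ^ q" using q_ge2 by (simp add: zero_power)
  then show ?thesis by (simp add: eq_neg_iff_add_eq_0 add.commute)
qed

lemma frob_diff: "(x - y :: 'a) ^ q = x ^ q - y ^ q"
  using frob[of x "- y"] frob_minus[of y] by simp

lemma beta_nz: "\<beta> \<noteq> 0"
proof
  assume b: "\<beta> = 0"
  have "UNIV \<subseteq> {0, 1 :: 'a}"
  proof
    fix x :: 'a
    show "x \<in> {0, 1}"
    proof (cases "x = 0")
      case False
      then obtain k :: nat where "x = \<beta> ^ k" using prim unfolding primitive_elem_def by blast
      then show ?thesis using b by (cases k) auto
    qed simp
  qed
  then have "card (UNIV :: 'a set) \<le> card {0, 1 :: 'a}" by (intro card_mono) auto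
  also have "\<dots> \<le> 2" by simp
  finally have "q * q \<le> 2" using cardq by (simp add: power2_eq_square)
  moreover have "q * q \<ge> 2 * 2" using q_ge2 by (intro mult_le_mono) auto
  ultimately show False by simp
qed

lemma beta_ne: "\<beta> ^ (2 * q) \<noteq> \<beta> ^ 2"
proof
  assume eq: "\<beta> ^ (2 * q) = \<beta> ^ 2"
  define m where "m = 2 * q - 2"
  have m1: "m \<ge> 1" using q_ge2 unfolding m_def by simp
  have "2 * q = m + 2" using q_ge2 unfolding m_def by simp
  then have "\<beta> ^ (2 * q) = \<beta> ^ m * \<beta> ^ 2" by (simp only: power_add)
  then have e2: "\<beta> ^ m * \<beta> ^ 2 = \<beta> ^ 2" using eq by simp
  have "\<beta> ^ 2 \<noteq> 0" using beta_nz by simp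
  then have bm: "\<beta> ^ m = 1" using e2 by (metis mult_cancel_right2)
  define P :: "'a poly" where "P = monom 1 m - 1"
  have polyP: "poly P x = x ^ m - 1" for x by (simp add: P_def poly_monom)
  have "P \<noteq> 0"
  proof
    assume "P = 0"
    then have "poly P 0 = 0" by simp
    moreover have "poly P (0::'a) = - 1" using polyP[of 0] m1 by simp
    ultimately show False by simp
  qed
  have degP: "degree P \<le> m" unfolding P_def
    by (intro degree_diff_le) (auto simp: degree_monom_le)
  have sub: "UNIV - {0} \<subseteq> {x. poly P x = 0}"
  proof
    fix x :: 'a assume "x \<in> UNIV - {0}"
    then obtain k :: nat where "x = \<beta> ^ k" using prim unfolding primitive_elem_def by blast
    then have "x ^ m = (\<beta> ^ m) ^ k" by (simp add: power_mult[symmetric] mult.commute)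
    then show "x \<in> {x. poly P x = 0}" using bm polyP by simp
  qed
  have "card (UNIV - {0 :: 'a}) \<le> card {x. poly P x = 0}"
    by (rule card_mono[OF finite_subset[OF subset_UNIV finite_UNIV] sub])
  also have "\<dots> \<le> m" using card_poly_roots_bound[OF \<open>P \<noteq> 0\<close>] degP by linarith
  finally have "q ^ 2 - 1 \<le> 2 * q - 2" using cardq unfolding m_def by simp
  moreover have "q ^ 2 - 1 > 2 * q - 2"
  proof -
    have "q * q \<ge> 2 * q" using q_ge2 by simp
    then show ?thesis using q_ge2 unfolding power2_eq_square by linarith
  qed
  ultimately show False by linarith
qed

definition f :: "'a \<Rightarrow> 'a" where "f x = tr q (\<beta> * x)"
definition g :: "'a \<Rightarrow> 'a" where "g x = tr q (\<beta> ^ q * x)"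

lemma tr_in: "tr q (x::'a) \<in> subF q"
  unfolding subF_def tr_def using frob pow_qq by (simp add: add.commute)

lemma tr_add: "tr q (x + y :: 'a) = tr q x + tr q y"
  unfolding tr_def using frob by (simp add: algebra_simps)

lemma tr_diff: "tr q (x - y :: 'a) = tr q x - tr q y"
  unfolding tr_def using frob_diff by (simp add: algebra_simps)

lemma tr_scal: "a \<in> subF q \<Longrightarrow> tr q (a * x :: 'a) = a * tr q x"
  unfolding tr_def subF_def by (simp add: power_mult_distrib algebra_simps)

lemma f_add: "f (x + y) = f x + f y" and g_add: "g (x + y) = g x + g y"
  unfolding f_def g_def by (simp_all add: distrib_left tr_add)

lemma f_scal: "a \<in> subF q \<Longrightarrow> f (a * x) = a * f x"
  and g_scal: "a \<in> subF q \<Longrightarrow> g (a * x) = a * g x"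
  unfolding f_def g_def by (simp_all add: tr_scal[symmetric] mult.left_commute)

lemma f0: "f 0 = 0" and g0: "g 0 = 0"
  unfolding f_def g_def tr_def using q_ge2 by simp_all

lemma f_in: "f x \<in> subF q" and g_in: "g x \<in> subF q"
  unfolding f_def g_def by (simp_all add: tr_in)

lemma f_conj: "f (x ^ q) = g x" and g_conj: "g (x ^ q) = f x"
  unfolding f_def g_def tr_def by (simp_all add: power_mult_distrib pow_qq algebra_simps)

lemma fg_zero: assumes "f x = 0" "g x = 0" shows "x = 0"
proof -
  have A: "\<beta> * x + \<beta> ^ q * x ^ q = 0" using assms(1) unfolding f_def tr_def
    by (simp add: power_mult_distrib)
  have B: "\<beta> ^ q * x + \<beta> * x ^ q = 0" using assms(2) unfolding g_def tr_def
    by (simp add: power_mult_distrib pow_qq)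
  have "\<beta> * (\<beta> * x + \<beta> ^ q * x ^ q) - \<beta> ^ q * (\<beta> ^ q * x + \<beta> * x ^ q)
        = (\<beta> ^ 2 - \<beta> ^ q * \<beta> ^ q) * x"
    by (simp add: algebra_simps power2_eq_square)
  moreover have "\<beta> ^ (2 * q) = \<beta> ^ q * \<beta> ^ q" by (simp only: mult_2 power_add)
  ultimately have "\<beta> * (\<beta> * x + \<beta> ^ q * x ^ q) - \<beta> ^ q * (\<beta> ^ q * x + \<beta> * x ^ q)
        = (\<beta> ^ 2 - \<beta> ^ (2 * q)) * x" by simp
  then have "(\<beta> ^ 2 - \<beta> ^ (2 * q)) * x = 0" using A B by simp
  moreover have "\<beta> ^ 2 - \<beta> ^ (2 * q) \<noteq> 0" using beta_ne by (metis eq_iff_diff_eq_0)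
  ultimately show ?thesis by (metis mult_eq_0_iff)
qed

lemma fg_inj: assumes "f x = f y" "g x = g y" shows "x = y"
proof -
  have "f (x - y) = 0" "g (x - y) = 0"
    using assms unfolding f_def g_def by (simp_all add: right_diff_distrib tr_diff)
  then show ?thesis using fg_zero by fastforce
qed

lemma Psi_eq: "Psi q \<beta> c = map f c @ map g c"
  unfolding Psi_def f_def g_def by simp

lemma Psi_inj: "inj (Psi q \<beta>)"
proof
  fix a b assume "Psi q \<beta> a = Psi q \<beta> b"
  then have e: "map f a @ map g a = map f b @ map g b" by (simp add: Psi_eq)
  then have "length (map f a @ map g a) = length (map f b @ map g b)" by simp
  then have len: "length a = length b" by simp
  then have m1: "map f a = map f b" and m2: "map g a = map g b" using e by auto
  show "a = b"
  proof (rule nth_equalityI[OF len])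
    fix i assume "i < length a"
    then have "f (a ! i) = f (b ! i)" "g (a ! i) = g (b ! i)"
      using m1 m2 len by (metis nth_map)+
    then show "a ! i = b ! i" by (rule fg_inj)
  qed
qed

lemma map_map2:
  assumes "\<And>a b. h (a + b) = h a + h b" and "length x = length y"
  shows "map h (map2 (+) x y) = map2 (+) (map h x) (map h (y :: 'a list))"
  using assms(2) by (induct x y rule: list_induct2) (simp_all add: assms(1))

lemma Psi_len: "length (Psi q \<beta> c) = 2 * length c"
  by (simp add: Psi_eq)

lemma Psi_add: assumes len: "length x = length y"
  shows "Psi q \<beta> (map2 (+) x y) = map2 (+) (Psi q \<beta> x) (Psi q \<beta> y)"
proof -
  have "map2 (+) (Psi q \<beta> x) (Psi q \<beta> y)
      = map2 (+) (map f x) (map f y) @ map2 (+) (map g x) (map g y)"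
    using len by (simp add: Psi_eq zip_append)
  also have "\<dots> = map f (map2 (+) x y) @ map g (map2 (+) x y)"
    using map_map2[OF f_add len] map_map2[OF g_add len] by simp
  finally show ?thesis by (simp add: Psi_eq)
qed

lemma Psi_scal: "a \<in> subF q \<Longrightarrow>
  Psi q \<beta> (map (\<lambda>t. a * t) x) = map (\<lambda>t. a * t) (Psi q \<beta> x)"
  by (simp add: Psi_eq f_scal g_scal)

lemma Psi_zero: "Psi q \<beta> (replicate n 0) = replicate (2 * n) 0"
  by (simp add: Psi_eq f0 g0 mult_2 replicate_add)

lemma Psi_shift: "c \<noteq> [] \<Longrightarrow> Psi q \<beta> (conj_shift q c) = cyc_shift (Psi q \<beta> c)"
proof -
  assume "c \<noteq> []"
  then obtain ys y where c: "c = ys @ [y]" by (cases c rule: rev_exhaust) auto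
  show ?thesis unfolding c Psi_eq conj_shift_def cyc_shift_def
    by (simp add: f_conj g_conj butlast_append)
qed

lemma Psi_set: "set (Psi q \<beta> c) \<subseteq> subF q"
  by (auto simp: Psi_eq f_in g_in)

lemma Psi_ws: "w_s (length c) (Psi q \<beta> c) = w_h c"
proof -
  have key: "((Psi q \<beta> c ! j, Psi q \<beta> c ! (length c + j)) \<noteq> (0, 0)) = (c ! j \<noteq> 0)"
    if j: "j < length c" for j
  proof -
    have "Psi q \<beta> c ! j = f (c ! j)" "Psi q \<beta> c ! (length c + j) = g (c ! j)"
      using j by (simp_all add: Psi_eq nth_append)
    then show ?thesis using fg_zero f0 g0 by auto
  qed
  have "{j. j < length c \<and> (Psi q \<beta> c ! j, Psi q \<beta> c ! (length c + j)) \<noteq> (0, 0)}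
      = {j. j < length c \<and> c ! j \<noteq> 0}"
    using key by blast
  then show ?thesis unfolding w_s_def w_h_def by simp
qed

lemma Psi_zero_iff: "Psi q \<beta> c = replicate (length (Psi q \<beta> c)) 0 \<longleftrightarrow> c = replicate (length c) 0"
proof
  assume "Psi q \<beta> c = replicate (length (Psi q \<beta> c)) 0"
  then have "Psi q \<beta> c = Psi q \<beta> (replicate (length c) 0)" by (simp add: Psi_zero Psi_len)
  then show "c = replicate (length c) 0" using Psi_inj by (simp add: inj_eq)
next
  assume "c = replicate (length c) 0"
  then show "Psi q \<beta> c = replicate (length (Psi q \<beta> c)) 0"
    by (metis Psi_zero Psi_len)
qed

lemma Psi_mem: "Psi q \<beta> z \<in> Psi q \<beta> ` C \<longleftrightarrow> z \<in> C"
  using Psi_inj by (simp add: inj_image_mem_iff)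

end

theorem theorem3p6:
  fixes q n :: nat and \<beta> :: "'a::{finite,field}" and C :: "'a list set"
  assumes "\<exists>p k. prime p \<and> k > 0 \<and> q = p ^ k"
    and "card (UNIV :: 'a set) = q ^ 2"
    and "primitive_elem \<beta>"
    and "n > 0"
    and "C \<subseteq> {v. length v = n}"
  shows "(additive_conjucyclic q n C \<longleftrightarrow> linear_cyclic q (2 * n) (Psi q \<beta> ` C))
    \<and> (additive_conjucyclic q n C \<longrightarrow> min_hamming C = min_symplectic n (Psi q \<beta> ` C))"
proof -
  interpret ctx q \<beta> using assms(1-3) by unfold_locales
  have lenC: "\<And>c. c \<in> C \<Longrightarrow> length c = n" using assms(5) by auto
  have iff: "additive_conjucyclic q n C \<longleftrightarrow> linear_cyclic q (2 * n) (Psi q \<beta> ` C)"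
  proof
    assume AC: "additive_conjucyclic q n C"
    then have z: "replicate n 0 \<in> C"
      and ad: "\<And>x y. x \<in> C \<Longrightarrow> y \<in> C \<Longrightarrow> map2 (+) x y \<in> C"
      and sc: "\<And>a x. a \<in> subF q \<Longrightarrow> x \<in> C \<Longrightarrow> map (\<lambda>t. a * t) x \<in> C"
      and sh: "\<And>c. c \<in> C \<Longrightarrow> conj_shift q c \<in> C"
      unfolding additive_conjucyclic_def subspace_over_def by blast+
    show "linear_cyclic q (2 * n) (Psi q \<beta> ` C)"
      unfolding linear_cyclic_def subspace_over_def
    proof (intro conjI ballI)
      show "Psi q \<beta> ` C \<subseteq> {v. set v \<subseteq> subF q}" using Psi_set by auto
      show "Psi q \<beta> ` C \<subseteq> {v. length v = 2 * n}" using lenC Psi_len by auto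
      show "replicate (2 * n) 0 \<in> Psi q \<beta> ` C" using z Psi_zero by (metis image_eqI)
    next
      fix x y assume "x \<in> Psi q \<beta> ` C" "y \<in> Psi q \<beta> ` C"
      then obtain c d where "c \<in> C" "d \<in> C" "x = Psi q \<beta> c" "y = Psi q \<beta> d" by auto
      then show "map2 (+) x y \<in> Psi q \<beta> ` C"
        using ad[of c d] Psi_add[of c d] lenC by (metis image_eqI)
    next
      fix a :: 'a and x assume "a \<in> subF q" "x \<in> Psi q \<beta> ` C"
      then obtain c where "c \<in> C" "x = Psi q \<beta> c" by auto
      then show "map (\<lambda>t. a * t) x \<in> Psi q \<beta> ` C"
        using sc[of a c] Psi_scal[of a c] \<open>a \<in> subF q\<close> by (metis image_eqI)
    next
      fix v assume "v \<in> Psi q \<beta> ` C"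
      then obtain c where c: "c \<in> C" "v = Psi q \<beta> c" by auto
      then have "c \<noteq> []" using lenC assms(4) by fastforce
      then show "cyc_shift v \<in> Psi q \<beta> ` C"
        using sh[OF c(1)] Psi_shift c(2) by (metis image_eqI)
    qed
  next
    assume LC: "linear_cyclic q (2 * n) (Psi q \<beta> ` C)"
    then have z: "replicate (2 * n) 0 \<in> Psi q \<beta> ` C"
      and ad: "\<And>x y. x \<in> Psi q \<beta> ` C \<Longrightarrow> y \<in> Psi q \<beta> ` C \<Longrightarrow> map2 (+) x y \<in> Psi q \<beta> ` C"
      and sc: "\<And>a x. a \<in> subF q \<Longrightarrow> x \<in> Psi q \<beta> ` C \<Longrightarrow> map (\<lambda>t. a * t) x \<in> Psi q \<beta> ` C"
      and sh: "\<And>v. v \<in> Psi q \<beta> ` C \<Longrightarrow> cyc_shift v \<in> Psi q \<beta> ` C"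
      unfolding linear_cyclic_def subspace_over_def by blast+
    show "additive_conjucyclic q n C"
      unfolding additive_conjucyclic_def subspace_over_def
    proof (intro conjI ballI)
      show "C \<subseteq> {v. length v = n}" by (rule assms(5))
      show "replicate n 0 \<in> C" using z Psi_zero Psi_mem by metis
    next
      fix x y assume xy: "x \<in> C" "y \<in> C"
      then have "Psi q \<beta> (map2 (+) x y) \<in> Psi q \<beta> ` C"
        using ad[of "Psi q \<beta> x" "Psi q \<beta> y"] Psi_add[of x y] lenC by auto
      then show "map2 (+) x y \<in> C" using Psi_mem by blast
    next
      fix a :: 'a and x assume ax: "a \<in> subF q" "x \<in> C"
      then have "Psi q \<beta> (map (\<lambda>t. a * t) x) \<in> Psi q \<beta> ` C"
        using sc[of a "Psi q \<beta> x"] Psi_scal[of a x] by auto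
      then show "map (\<lambda>t. a * t) x \<in> C" using Psi_mem by blast
    next
      fix c assume c: "c \<in> C"
      then have "c \<noteq> []" using lenC assms(4) by fastforce
      then have "Psi q \<beta> (conj_shift q c) \<in> Psi q \<beta> ` C"
        using sh[of "Psi q \<beta> c"] c Psi_shift by auto
      then show "conj_shift q c \<in> C" using Psi_mem by blast
    qed
  qed
  have "{w_s n v | v. v \<in> Psi q \<beta> ` C \<and> v \<noteq> replicate (length v) 0}
      = {w_h c | c. c \<in> C \<and> c \<noteq> replicate (length c) 0}"
  proof (intro equalityI subsetI)
    fix w
    show "w \<in> {w_s n v | v. v \<in> Psi q \<beta> ` C \<and> v \<noteq> replicate (length v) 0}
      \<Longrightarrow> w \<in> {w_h c | c. c \<in> C \<and> c \<noteq> replicate (length c) 0}"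
    proof -
      assume "w \<in> {w_s n v | v. v \<in> Psi q \<beta> ` C \<and> v \<noteq> replicate (length v) 0}"
      then obtain c where c: "c \<in> C" "w = w_s n (Psi q \<beta> c)"
          "Psi q \<beta> c \<noteq> replicate (length (Psi q \<beta> c)) 0" by auto
      then have "w = w_h c" "c \<noteq> replicate (length c) 0"
        using Psi_ws[of c] lenC[OF c(1)] Psi_zero_iff[of c] by auto
      then show "w \<in> {w_h c | c. c \<in> C \<and> c \<noteq> replicate (length c) 0}" using c(1) by auto
    qed
  next
    fix w
    show "w \<in> {w_h c | c. c \<in> C \<and> c \<noteq> replicate (length c) 0}
      \<Longrightarrow> w \<in> {w_s n v | v. v \<in> Psi q \<beta> ` C \<and> v \<noteq> replicate (length v) 0}"
    proof -
      assume "w \<in> {w_h c | c. c \<in> C \<and> c \<noteq> replicate (length c) 0}"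
      then obtain c where c: "c \<in> C" "w = w_h c" "c \<noteq> replicate (length c) 0" by auto
      then have "w = w_s n (Psi q \<beta> c)" "Psi q \<beta> c \<noteq> replicate (length (Psi q \<beta> c)) 0"
        using Psi_ws[of c] lenC[OF c(1)] Psi_zero_iff[of c] by auto
      then show "w \<in> {w_s n v | v. v \<in> Psi q \<beta> ` C \<and> v \<noteq> replicate (length v) 0}"
        using c(1) by blast
    qed
  qed
  then have "min_hamming C = min_symplectic n (Psi q \<beta> ` C)"
    unfolding min_hamming_def min_symplectic_def by simp
  with iff show ?thesis by simp
qed

end
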